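(* Let $\kappa\geq 1$ be a cardinal and let $(S,\mu)$ be a multisemigroup with multiplicities bounded by $\kappa$. Let $S^\diamond$ be the set of all words in the alphabet $S$ of length at least two, and let $\overline{\mu}:S^\diamond\to \mathcal{B}_\kappa(S)$ be defined recursively by $\overline{\mu}_{st}=\mu_{s,t}$ for $s,t\in S$, and, for $w=sx$ with $s\in S$ and $x$ a word of length at least two, $$\overline{\mu}_w(t)=\sum_{a\in S}\overline{\mu}_x(a)\,\mu_{s,a}(t)\qquad (t\in S).$$ Then, for every $w\in S^\diamond$ of the form $w=xs$, where $s\in S$ and $x$ is a word of length at least two, we have $$\overline{\mu}_w(t)=\sum_{a\in S}\overline{\mu}_x(a)\,\mu_{a,s}(t)\qquad\text{for all } t\in S.$$
   Context: For a cardinal $\kappa\geq 1$, $\mathrm{Card}_\kappa$ denotes the set of all cardinals not greater than $\kappa$, made into a complete semiring: the sum of any family of elements is the cardinal sum (disjoint union) and the product is the cardinal product (Cartesian product), in both cases with the convention that any cardinal greater than $\kappa$ is identified with $\kappa$. For a set $X$, $\mathcal{B}_\kappa(X)$ is the set of all functions $X\to\mathrm{Card}_\kappa$ (with pointwise operations). For a cardinal $\lambda\le\kappa$ and a function $\nu:S\to\mathrm{Card}_\kappa$, $\lambda\nu$ denotes the sum of $\lambda$ copies of $\nu$ (computed pointwise in $\mathrm{Card}_\kappa$). A multisemigroup with multiplicities bounded by $\kappa$ is a pair $(S,\mu)$ where $S$ is a non-empty set and $\mu:S\times S\to\mathcal{B}_\kappa(S)$, $(s,t)\mapsto\mu_{s,t}$,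 satisfies, for all $r,s,t\in S$, the equality of functions $S\to\mathrm{Card}_\kappa$ $$\sum_{i\in S}\mu_{s,t}(i)\,\mu_{r,i}=\sum_{j\in S}\mu_{r,s}(j)\,\mu_{j,t}.$$ *)

theory Defs
  imports Main
begin

text \<open>Card_kappa is modelled by the subsets of the type 'k (so kappa = |UNIV :: 'k set| >= 1,
  as types are nonempty); a subset A represents the cardinal |A|, and two elements of
  Card_kappa are equal iff their representatives are equipotent (=o).\<close>

text \<open>Truncation: a representative in 'k of min(|A|, kappa).\<close>
definition ctrunc :: "'a set \<Rightarrow> 'k set" where
  "ctrunc A = (SOME B :: 'k set.
      if ordLeq2 (card_of A) (card_of (UNIV :: 'k set)) then ordIso2 (card_of B) (card_of A) else B = UNIV)"

definition ksum :: "('i \<Rightarrow> 'k set) \<Rightarrow> 'i set \<Rightarrow> 'k set" where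
  "ksum f I = ctrunc (SIGMA i:I. f i)"

definition kprod :: "'k set \<Rightarrow> 'k set \<Rightarrow> 'k set" where
  "kprod A B = ctrunc (A \<times> B)"

text \<open>mu s t u is (a representative of) mu_{s,t}(u); S is the type 's.
  The axiom: sum_i mu_{s,t}(i) mu_{r,i} = sum_j mu_{r,s}(j) mu_{j,t}, evaluated at every u.\<close>
definition multisemigroup :: "('s \<Rightarrow> 's \<Rightarrow> 's \<Rightarrow> 'k set) \<Rightarrow> bool" where
  "multisemigroup mu \<longleftrightarrow>
     (\<forall>r s t u. ordIso2 (card_of (ksum (\<lambda>i. kprod (mu s t i) (mu r i u)) UNIV))
                 (card_of (ksum (\<lambda>j. kprod (mu r s j) (mu j t u)) UNIV)))"

text \<open>mubar on words of length >= 2 (value on shorter words is irrelevant).\<close>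
fun mubar :: "('s \<Rightarrow> 's \<Rightarrow> 's \<Rightarrow> 'k set) \<Rightarrow> 's list \<Rightarrow> 's \<Rightarrow> 'k set" where
  "mubar mu [] u = {}"
| "mubar mu [s] u = {}"
| "mubar mu [s, t] u = mu s t u"
| "mubar mu (s # t # r # x) u = ksum (\<lambda>a. kprod (mubar mu (t # r # x) a) (mu s a u)) UNIV"

end

theory Submission
  imports Defs
begin

definition teq :: "'k itself \<Rightarrow> 'a set \<Rightarrow> 'b set \<Rightarrow> bool" where
  "teq T A B \<longleftrightarrow> ordIso2 (card_of A) (card_of B) \<or>
     (ordLeq2 (card_of (UNIV::'k set)) (card_of A) \<and> ordLeq2 (card_of (UNIV::'k set)) (card_of B))"

lemma not_le_card: "\<not> ordLeq2 (card_of A) (card_of B) \<Longrightarrow> ordLeq2 (card_of B) (card_of A)"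
  using card_of_ordLess[of A B] card_of_ordLeq[of A B] ordLess_imp_ordLeq by blast

lemma le_empty_card: "ordLeq2 (card_of X) (card_of ({}::'b set)) \<Longrightarrow> X = {}"
  using card_of_ordLeq[of X "{}::'b set"] by auto

lemma teq_refl: "teq T A A"
  unfolding teq_def using card_of_refl by blast

lemma teq_sym: "teq T A B \<Longrightarrow> teq T B A"
  unfolding teq_def using ordIso_symmetric by blast

lemma teq_trans: "teq T A B \<Longrightarrow> teq T B C \<Longrightarrow> teq T A C"
  unfolding teq_def
  by (meson ordIso_transitive ordLeq_ordIso_trans ordIso_symmetric)

lemma ordIso_teq: "ordIso2 (card_of A) (card_of B) \<Longrightarrow> teq T A B"
  unfolding teq_def by blast

lemma ctrunc_teq: "teq TYPE('k) (ctrunc A :: 'k set) A"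
proof (cases "ordLeq2 (card_of A) (card_of (UNIV :: 'k set))")
  case True
  then obtain f :: "_ \<Rightarrow> 'k" where f: "inj_on f A"
    unfolding card_of_ordLeq[symmetric] by (elim exE conjE)
  have "ordIso2 (card_of (f ` A)) (card_of A)"
    by (rule ordIso_symmetric[OF card_of_ordIsoI[OF inj_on_imp_bij_betw[OF f]]])
  hence "\<exists>B :: 'k set. ordIso2 (card_of B) (card_of A)" by (rule exI)
  hence "ordIso2 (card_of (ctrunc A :: 'k set)) (card_of A)"
    unfolding ctrunc_def using True by (simp only: if_True) (rule someI_ex)
  thus ?thesis by (rule ordIso_teq)
next
  case False
  hence "(ctrunc A :: 'k set) = UNIV" unfolding ctrunc_def by simp
  moreover have "ordLeq2 (card_of (UNIV :: 'k set)) (card_of A)" by (rule not_le_card[OF False])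
  moreover have "ordLeq2 (card_of (UNIV :: 'k set)) (card_of (UNIV :: 'k set))"
    using card_of_refl[of "UNIV :: 'k set"] unfolding ordIso_iff_ordLeq by (elim conjE)
  ultimately show ?thesis unfolding teq_def by simp
qed

lemma teq_k: "teq TYPE('k) (C :: 'k set) (D :: 'k set) \<Longrightarrow> ordIso2 (card_of C) (card_of D)"
proof -
  assume "teq TYPE('k) C D"
  moreover have "ordLeq2 (card_of C) (card_of (UNIV :: 'k set))" "ordLeq2 (card_of D) (card_of (UNIV :: 'k set))"
    by (simp_all add: card_of_mono1)
  ultimately show ?thesis unfolding teq_def
    by (meson ordIso_iff_ordLeq ordIso_transitive ordIso_symmetric)
qed

lemma teq_Sigma: "(\<And>i. i \<in> I \<Longrightarrow> teq (T::'k itself) (A i) (B i)) \<Longrightarrow> teq T (Sigma I A) (Sigma I B)"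
proof -
  assume h: "\<And>i. i \<in> I \<Longrightarrow> teq (T::'k itself) (A i) (B i)"
  show ?thesis
  proof (cases "\<forall>i\<in>I. ordIso2 (card_of (A i)) (card_of (B i))")
    case True
    thus ?thesis using card_of_Sigma_cong1 ordIso_teq by blast
  next
    case False
    then obtain i where i: "i \<in> I" "ordLeq2 (card_of (UNIV::'k set)) (card_of (A i))"
      "ordLeq2 (card_of (UNIV::'k set)) (card_of (B i))"
      using h unfolding teq_def by blast
    have "ordLeq2 (card_of (A i)) (card_of (Sigma I A))"
      by (rule card_of_ordLeqI[of "\<lambda>x. (i, x)"]) (auto simp: inj_on_def i)
    moreover have "ordLeq2 (card_of (B i)) (card_of (Sigma I B))"
      by (rule card_of_ordLeqI[of "\<lambda>x. (i, x)"]) (auto simp: inj_on_def i)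
    ultimately show ?thesis unfolding teq_def
      using ordLeq_transitive[OF i(2)] ordLeq_transitive[OF i(3)] by blast
  qed
qed

lemma Times_cong: "ordIso2 (card_of A) (card_of A') \<Longrightarrow> ordIso2 (card_of B) (card_of B') \<Longrightarrow>
   ordIso2 (card_of (A \<times> B)) (card_of (A' \<times> B'))"
proof -
  assume a: "ordIso2 (card_of A) (card_of A')" and b: "ordIso2 (card_of B) (card_of B')"
  have "ordLeq2 (card_of (A \<times> B)) (card_of (A' \<times> B'))"
    using card_of_Times_mono1[of A A' B] card_of_Times_mono2[of B B' A'] a b
    by (simp add: ordIso_iff_ordLeq) (rule ordLeq_transitive)
  moreover have "ordLeq2 (card_of (A' \<times> B')) (card_of (A \<times> B))"
    using card_of_Times_mono1[of A' A B'] card_of_Times_mono2[of B' B A] a b ordIso_symmetric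
    by (simp add: ordIso_iff_ordLeq) (rule ordLeq_transitive)
  ultimately show ?thesis by (simp add: ordIso_iff_ordLeq)
qed

lemma nonempty_of_ge: "ordLeq2 (card_of (UNIV::'k set)) (card_of A) \<Longrightarrow> A \<noteq> {}"
  using le_empty_card[of "UNIV::'k set"] by auto

lemma empty_of_iso: "ordIso2 (card_of B) (card_of B') \<Longrightarrow> B = {} \<Longrightarrow> B' = {}"
  using le_empty_card ordIso_iff_ordLeq ordIso_symmetric by blast

lemma teq_Times:
  assumes a: "teq TYPE('k) A A'" and b: "teq TYPE('k) B B'"
  shows "teq TYPE('k) (A \<times> B) (A' \<times> B')"
proof -
  let ?K = "card_of (UNIV::'k set)"
  consider "ordIso2 (card_of A) (card_of A')" "ordIso2 (card_of B) (card_of B')"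
    | "ordLeq2 ?K (card_of A)" "ordLeq2 ?K (card_of A')" "ordIso2 (card_of B) (card_of B')"
    | "ordIso2 (card_of A) (card_of A')" "ordLeq2 ?K (card_of B)" "ordLeq2 ?K (card_of B')"
    | "ordLeq2 ?K (card_of A)" "ordLeq2 ?K (card_of A')" "ordLeq2 ?K (card_of B)" "ordLeq2 ?K (card_of B')"
    using a b unfolding teq_def by blast
  thus ?thesis
  proof cases
    case 1 thus ?thesis using Times_cong ordIso_teq by blast
  next
    case 2
    show ?thesis
    proof (cases "B = {}")
      case True
      hence "B' = {}" using empty_of_iso 2 by blast
      hence "bij_betw undefined (A \<times> B) (A' \<times> B')" "bij_betw undefined (B \<times> A) (B' \<times> A')" using True by (simp_all add: bij_betw_def)
      thus ?thesis by (blast intro: ordIso_teq card_of_ordIsoI)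
    next
      case False
      hence "B' \<noteq> {}" using empty_of_iso 2 ordIso_symmetric by blast
      thus ?thesis unfolding teq_def
        using ordLeq_transitive[OF 2(1) card_of_Times1[OF False]] ordLeq_transitive[OF 2(2) card_of_Times1[OF \<open>B' \<noteq> {}\<close>]] by blast
    qed
  next
    case 3
    show ?thesis
    proof (cases "A = {}")
      case True
      hence "A' = {}" using empty_of_iso 3 by blast
      hence "bij_betw undefined (A \<times> B) (A' \<times> B')" "bij_betw undefined (B \<times> A) (B' \<times> A')" using True by (simp_all add: bij_betw_def)
      thus ?thesis by (blast intro: ordIso_teq card_of_ordIsoI)
    next
      case False
      hence "A' \<noteq> {}" using empty_of_iso 3 ordIso_symmetric by blast
      thus ?thesis unfolding teq_def
        using ordLeq_transitive[OF 3(2) card_of_Times2[OF False]] ordLeq_transitive[OF 3(3) card_of_Times2[OF \<open>A' \<noteq> {}\<close>]] by blast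
    qed
  next
    case 4
    hence "B \<noteq> {}" "B' \<noteq> {}" using nonempty_of_ge by blast+
    thus ?thesis unfolding teq_def
      using ordLeq_transitive[OF 4(1) card_of_Times1[of B A]] ordLeq_transitive[OF 4(2) card_of_Times1[of B' A']] by blast
  qed
qed

lemma teq_ksum_prod:
  "teq TYPE('k) (ksum (\<lambda>i. kprod (A i) (B i)) I :: 'k set) (SIGMA i:I. A i \<times> B i)"
proof -
  have "teq TYPE('k) (ksum (\<lambda>i. kprod (A i) (B i)) I :: 'k set) (SIGMA i:I. (kprod (A i) (B i) :: 'k set))"
    unfolding ksum_def by (rule ctrunc_teq)
  moreover have "teq TYPE('k) (SIGMA i:I. (kprod (A i) (B i) :: 'k set)) (SIGMA i:I. A i \<times> B i)"
    by (rule teq_Sigma) (simp add: kprod_def ctrunc_teq)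
  ultimately show ?thesis by (rule teq_trans)
qed

lemma assoc_iso:
  "ordIso2 (card_of (SIGMA e:I. (SIGMA d:J. Y d \<times> M d e) \<times> N e))
           (card_of (SIGMA d:J. Y d \<times> (SIGMA e:I. M d e \<times> N e)))"
proof -
  have "bij_betw (\<lambda>(e, ((d,(y,m)), n)). (d, (y, (e, (m, n)))))
     (SIGMA e:I. (SIGMA d:J. Y d \<times> M d e) \<times> N e) (SIGMA d:J. Y d \<times> (SIGMA e:I. M d e \<times> N e))"
    by (rule bij_betw_byWitness[where f'="\<lambda>(d, (y, (e, (m, n)))). (e, ((d,(y,m)), n))"]) auto
  thus ?thesis by (rule card_of_ordIsoI)
qed

lemma main:
  fixes mu :: "'s \<Rightarrow> 's \<Rightarrow> 's \<Rightarrow> 'k set" and x :: "'s list"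
  assumes ms: "multisemigroup mu"
  shows "2 \<le> length x \<Longrightarrow> teq TYPE('k) (mubar mu (x @ [s]) t) (SIGMA a:UNIV. mubar mu x a \<times> mu a s t)"
proof (induction x arbitrary: s t)
  case Nil thus ?case by simp
next
  case (Cons a y)
  have ax: "\<And>r s t u. teq TYPE('k) (ksum (\<lambda>i. kprod (mu s t i) (mu r i u)) UNIV :: 'k set)
                 (ksum (\<lambda>j. kprod (mu r s j) (mu j t u)) UNIV :: 'k set)"
    by (rule ordIso_teq[OF ms[unfolded multisemigroup_def, rule_format]])
  obtain b z where y: "y = b # z" using Cons.prems by (cases y) auto
  show ?case
  proof (cases z)
    case Nil
    have "teq TYPE('k) (mubar mu ((a # y) @ [s]) t) (ksum (\<lambda>j. kprod (mu a b j) (mu j s t)) UNIV :: 'k set)"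
      using ax[of b s a t] by (simp add: y Nil)
    from teq_trans[OF this teq_ksum_prod] show ?thesis by (simp add: y Nil)
  next
    case (Cons c z')
    let ?Y = "mubar mu y"
    have IH: "\<And>s t. teq TYPE('k) (mubar mu (y @ [s]) t) (SIGMA a:UNIV. ?Y a \<times> mu a s t)"
      using Cons.IH y Cons by simp
    note tr = teq_trans[where T="TYPE('k)"]
    have S1: "teq TYPE('k) (mubar mu ((a # y) @ [s]) t) (SIGMA e:UNIV. mubar mu (y@[s]) e \<times> mu a e t)"
      using teq_ksum_prod[of "\<lambda>e. mubar mu (y@[s]) e" "\<lambda>e. mu a e t" UNIV]
      by (simp add: y Cons)
    have S2: "teq TYPE('k) (SIGMA e:UNIV. mubar mu (y@[s]) e \<times> mu a e t)
        (SIGMA e:UNIV. (SIGMA d:UNIV. ?Y d \<times> mu d s e) \<times> mu a e t)"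
      by (intro teq_Sigma teq_Times IH teq_refl)
    have S3: "teq TYPE('k) (SIGMA e:UNIV. (SIGMA d:UNIV. ?Y d \<times> mu d s e) \<times> mu a e t)
        (SIGMA d:UNIV. ?Y d \<times> (SIGMA e:UNIV. mu d s e \<times> mu a e t))"
      by (rule ordIso_teq, rule assoc_iso)
    have S4: "teq TYPE('k) (SIGMA d:UNIV. ?Y d \<times> (SIGMA e:UNIV. mu d s e \<times> mu a e t))
        (SIGMA d:UNIV. ?Y d \<times> (SIGMA e:UNIV. mu a d e \<times> mu e s t))"
    proof (rule teq_Sigma, rule teq_Times[OF teq_refl])
      fix d
      show "teq TYPE('k) (SIGMA e:UNIV. mu d s e \<times> mu a e t) (SIGMA e:UNIV. mu a d e \<times> mu e s t)"
        by (rule tr[OF teq_sym[OF teq_ksum_prod] tr[OF ax[of d s a t] teq_ksum_prod]])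
    qed
    have S5: "teq TYPE('k) (SIGMA d:UNIV. ?Y d \<times> (SIGMA e:UNIV. mu a d e \<times> mu e s t))
        (SIGMA e:UNIV. (SIGMA d:UNIV. ?Y d \<times> mu a d e) \<times> mu e s t)"
      by (rule ordIso_teq, rule ordIso_symmetric, rule assoc_iso)
    have S6: "teq TYPE('k) (SIGMA e:UNIV. (SIGMA d:UNIV. ?Y d \<times> mu a d e) \<times> mu e s t)
        (SIGMA e:UNIV. mubar mu (a # y) e \<times> mu e s t)"
    proof (rule teq_Sigma, rule teq_Times[OF _ teq_refl])
      fix e
      show "teq TYPE('k) (SIGMA d:UNIV. ?Y d \<times> mu a d e) (mubar mu (a # y) e)"
        using teq_sym[OF teq_ksum_prod[of ?Y "\<lambda>d. mu a d e" UNIV]] by (simp add: y Cons)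
    qed
    show ?thesis by (rule tr[OF S1 tr[OF S2 tr[OF S3 tr[OF S4 tr[OF S5 S6]]]]])
  qed
qed

theorem proposition5:
  fixes mu :: "'s \<Rightarrow> 's \<Rightarrow> 's \<Rightarrow> 'k set"
  assumes "multisemigroup mu"
  shows "\<forall>x s t. length x \<ge> 2 \<longrightarrow>
           ordIso2 (card_of (mubar mu (x @ [s]) t))
                   (card_of (ksum (\<lambda>a. kprod (mubar mu x a) (mu a s t)) UNIV))"
proof (intro allI impI)
  fix x :: "'s list" and s t assume "length x \<ge> 2"
  hence A: "teq TYPE('k) (mubar mu (x @ [s]) t) (SIGMA a:UNIV. mubar mu x a \<times> mu a s t)"
    using main[OF assms] by blast
  moreover have B: "teq TYPE('k) (ksum (\<lambda>a. kprod (mubar mu x a) (mu a s t)) UNIV :: 'k set)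
      (SIGMA a:UNIV. mubar mu x a \<times> mu a s t)" by (rule teq_ksum_prod)
  show "ordIso2 (card_of (mubar mu (x @ [s]) t))
                   (card_of (ksum (\<lambda>a. kprod (mubar mu x a) (mu a s t)) UNIV))"
    by (rule teq_k[OF teq_trans[OF A teq_sym[OF B]]])
qed

end
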